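(* Let $\xi,M_0,c_*,c^*$ be positive constants, $\lambda_1=M_0\sqrt{(\log p)/n}$, and let $\hat\Sigma$ be the $p\times p$ matrix with entries $(x_j^Tx_k/n)I\{|x_j^Tx_k/n|\ge\lambda_1\}$. Suppose $\phi_{\min}(\hat\Sigma)\ge c_*$ and $s\lambda_1(1+\xi)^2\le c_*/2$. Then $\kappa^2(\xi,S)\ge c_*/2$ for all nonempty $S$ with $|S|\le s$. Let $K=2\xi^2(c^*/c_*+1/2)$. If in addition $\phi_{\max}(\hat\Sigma)\le c^*$ and $s\lambda_1(1+K)+\lambda_1\le c_*/2$, then for every nonempty $S$ with $|S|\le s$ and the integer $m$ with $m-1<K|S|\le m$, one has $\phi_-(m,S)\ge c_*/2$, $\kappa^2(\xi,S)\ge c_*/2$ and $\xi^2/\kappa^2(\xi,S)\le K/\phi_+(m,S)$.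
   Context: $X=(x_1,\dots,x_p)\in\mathbb{R}^{n\times p}$ is a deterministic matrix with $\|x_j\|_2^2=n$ for all $j$; $s>0$. For $\xi\ge1$ and nonempty $S\subseteq\{1,\dots,p\}$, the cone $\mathcal C(\xi,S)=\{u\in\mathbb{R}^p:\|u_{S^c}\|_1\le\xi\|u_S\|_1\}$ and the compatibility factor $\kappa(\xi,S)=\inf\{\|Xu\|_2|S|^{1/2}/(n^{1/2}\|u_S\|_1):0\ne u\in\mathcal C(\xi,S)\}$. For positive integers $m$, sparse eigenvalues $\phi_-(m,S)=\min_{B\supseteq S,|B\setminus S|\le m}\phi_{\min}(X_B^TX_B/n)$ and $\phi_+(m,S)=\max_{B\cap S=\emptyset,|B|\le m}\phi_{\max}(X_B^TX_B/n)$, where $X_B$ is the submatrix of columns indexed by $B$ and $\phi_{\min},\phi_{\max}$ denote smallest and largest eigenvalues. *)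

theory Defs
  imports "HOL-Analysis.Analysis"
begin

text \<open>Conventions: the design matrix X has rows 0..<n and columns 0..<p, represented
  as a function nat => nat => real. Vectors in R^p are functions nat => real
  supported on {0..<p}. Square matrices are functions nat => nat => real, and
  submatrices are obtained by restricting the indices to a set B.\<close>

definition gram :: "nat \<Rightarrow> (nat \<Rightarrow> nat \<Rightarrow> real) \<Rightarrow> nat \<Rightarrow> nat \<Rightarrow> real" where
  "gram n X j k = (\<Sum>i<n. X i j * X i k) / real n"

definition is_eig :: "(nat \<Rightarrow> nat \<Rightarrow> real) \<Rightarrow> nat set \<Rightarrow> real \<Rightarrow> bool" where
  "is_eig A B e \<longleftrightarrow> (\<exists>v. (\<forall>j. j \<notin> B \<longrightarrow> v j = 0) \<and> (\<exists>j\<in>B. v j \<noteq> 0) \<and>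
      (\<forall>j\<in>B. (\<Sum>k\<in>B. A j k * v k) = e * v j))"

definition phi_min :: "(nat \<Rightarrow> nat \<Rightarrow> real) \<Rightarrow> nat set \<Rightarrow> real" where
  "phi_min A B = Min {e. is_eig A B e}"

definition phi_max :: "(nat \<Rightarrow> nat \<Rightarrow> real) \<Rightarrow> nat set \<Rightarrow> real" where
  "phi_max A B = Max {e. is_eig A B e}"

definition l1_on :: "(nat \<Rightarrow> real) \<Rightarrow> nat set \<Rightarrow> real" where
  "l1_on u A = (\<Sum>j\<in>A. \<bar>u j\<bar>)"

definition norm_Xu :: "nat \<Rightarrow> nat \<Rightarrow> (nat \<Rightarrow> nat \<Rightarrow> real) \<Rightarrow> (nat \<Rightarrow> real) \<Rightarrow> real" where
  "norm_Xu n p X u = sqrt (\<Sum>i<n. (\<Sum>j<p. X i j * u j)\<^sup>2)"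

definition cone :: "nat \<Rightarrow> real \<Rightarrow> nat set \<Rightarrow> (nat \<Rightarrow> real) set" where
  "cone p \<xi> S = {u. (\<forall>j. j \<ge> p \<longrightarrow> u j = 0) \<and> l1_on u ({0..<p} - S) \<le> \<xi> * l1_on u S}"

definition compat :: "nat \<Rightarrow> nat \<Rightarrow> (nat \<Rightarrow> nat \<Rightarrow> real) \<Rightarrow> real \<Rightarrow> nat set \<Rightarrow> real" where
  "compat n p X \<xi> S = Inf {norm_Xu n p X u * sqrt (real (card S)) / (sqrt (real n) * l1_on u S)
      | u. u \<in> cone p \<xi> S \<and> u \<noteq> (\<lambda>_. 0)}"

definition phi_minus :: "nat \<Rightarrow> nat \<Rightarrow> (nat \<Rightarrow> nat \<Rightarrow> real) \<Rightarrow> nat \<Rightarrow> nat set \<Rightarrow> real" where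
  "phi_minus n p X m S = Min {phi_min (gram n X) B | B. S \<subseteq> B \<and> B \<subseteq> {0..<p} \<and> card (B - S) \<le> m}"

definition phi_plus :: "nat \<Rightarrow> nat \<Rightarrow> (nat \<Rightarrow> nat \<Rightarrow> real) \<Rightarrow> nat \<Rightarrow> nat set \<Rightarrow> real" where
  "phi_plus n p X m S = Max {phi_max (gram n X) B | B. B \<noteq> {} \<and> B \<subseteq> {0..<p} \<and> B \<inter> S = {} \<and> card B \<le> m}"

definition sigma_hat :: "nat \<Rightarrow> (nat \<Rightarrow> nat \<Rightarrow> real) \<Rightarrow> real \<Rightarrow> nat \<Rightarrow> nat \<Rightarrow> real" where
  "sigma_hat n X lam1 j k = (if \<bar>gram n X j k\<bar> \<ge> lam1 then gram n X j k else 0)"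

end

theory Submission
  imports Defs
begin

definition dotB :: "nat set \<Rightarrow> (nat\<Rightarrow>real) \<Rightarrow> (nat\<Rightarrow>real) \<Rightarrow> real" where
  "dotB B x y = (\<Sum>j\<in>B. x j * y j)"

definition quadf :: "(nat\<Rightarrow>nat\<Rightarrow>real) \<Rightarrow> nat set \<Rightarrow> (nat\<Rightarrow>real) \<Rightarrow> real" where
  "quadf A B x = (\<Sum>j\<in>B. x j * (\<Sum>k\<in>B. A j k * x k))"

lemma sym_swap:
  fixes A :: "nat\<Rightarrow>nat\<Rightarrow>real"
  assumes "\<forall>j\<in>B. \<forall>k\<in>B. A j k = A k j"
  shows "(\<Sum>j\<in>B. w j * (\<Sum>k\<in>B. A j k * v k)) = (\<Sum>k\<in>B. v k * (\<Sum>j\<in>B. A k j * w j))"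
proof -
  have "(\<Sum>j\<in>B. w j * (\<Sum>k\<in>B. A j k * v k)) = (\<Sum>j\<in>B. \<Sum>k\<in>B. w j * A j k * v k)"
    by (simp add: sum_distrib_left mult_ac)
  also have "\<dots> = (\<Sum>k\<in>B. \<Sum>j\<in>B. w j * A j k * v k)" by (rule sum.swap)
  also have "\<dots> = (\<Sum>k\<in>B. v k * (\<Sum>j\<in>B. A k j * w j))"
    by (auto simp: sum_distrib_left assms intro!: sum.cong)
  finally show ?thesis .
qed

lemma dot_sym: "dotB B x y = dotB B y x"
  unfolding dotB_def by (simp add: mult.commute)

lemma dot_self_nonneg: "0 \<le> dotB B x x"
  unfolding dotB_def by (auto intro: sum_nonneg)

lemma dot_self_zero:
  assumes "finite B" "dotB B x x = 0" "j \<in> B" shows "x j = 0"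
proof -
  have "(\<forall>j\<in>B. x j * x j = 0)"
    using assms(2) unfolding dotB_def
    by (subst sum_nonneg_eq_0_iff[symmetric]) (auto simp: assms(1))
  thus ?thesis using assms(3) by auto
qed

lemma coord_le_dot:
  assumes "finite B" "j \<in> B" shows "(x j)^2 \<le> dotB B x x"
  unfolding dotB_def power2_eq_square
  by (rule member_le_sum[where f="\<lambda>j. x j * x j"]) (auto simp: assms)

lemma bessel:
  assumes fB: "finite B" and fV: "finite V"
    and orth: "\<forall>v\<in>V. \<forall>w\<in>V. v \<noteq> w \<longrightarrow> dotB B v w = 0"
    and pos: "\<forall>v\<in>V. dotB B v v > 0"
  shows "(\<Sum>v\<in>V. (dotB B x v)^2 / dotB B v v) \<le> dotB B x x"
proof -
  define c where "c v = dotB B x v / dotB B v v" for v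
  define y where "y i = x i - (\<Sum>v\<in>V. c v * v i)" for i
  have cross: "(\<Sum>i\<in>B. x i * (\<Sum>v\<in>V. c v * v i)) = (\<Sum>v\<in>V. c v * dotB B x v)"
    unfolding dotB_def by (simp add: sum_distrib_left sum.swap[of _ B] mult.assoc mult.left_commute)
  have inner: "(\<Sum>w\<in>V. c w * dotB B v w) = c v * dotB B v v" if "v \<in> V" for v
  proof -
    have "(\<Sum>w\<in>V. c w * dotB B v w) = (\<Sum>w\<in>V. if w = v then c v * dotB B v v else 0)"
      using orth that by (intro sum.cong) auto
    also have "\<dots> = c v * dotB B v v" using fV that by simp
    finally show ?thesis .
  qed
  have sq: "(\<Sum>i\<in>B. (\<Sum>v\<in>V. c v * v i) * (\<Sum>v\<in>V. c v * v i)) = (\<Sum>v\<in>V. c v * c v * dotB B v v)"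
  proof -
    have "(\<Sum>i\<in>B. (\<Sum>v\<in>V. c v * v i) * (\<Sum>w\<in>V. c w * w i))
        = (\<Sum>i\<in>B. \<Sum>v\<in>V. \<Sum>w\<in>V. c v * (c w * (v i * w i)))"
      by (auto simp: sum_product mult_ac intro!: sum.cong)
    also have "\<dots> = (\<Sum>v\<in>V. \<Sum>w\<in>V. \<Sum>i\<in>B. c v * (c w * (v i * w i)))"
      by (simp add: sum.swap[of _ B])
    also have "\<dots> = (\<Sum>v\<in>V. c v * (\<Sum>w\<in>V. c w * dotB B v w))"
      unfolding dotB_def by (simp add: sum_distrib_left)
    also have "\<dots> = (\<Sum>v\<in>V. c v * (c v * dotB B v v))"
      using inner by (intro sum.cong) auto
    finally show ?thesis by (simp add: mult.assoc)
  qed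
  have "dotB B y y = dotB B x x - 2 * (\<Sum>v\<in>V. c v * dotB B x v) + (\<Sum>v\<in>V. c v * c v * dotB B v v)"
  proof -
    have "dotB B y y = (\<Sum>i\<in>B. x i * x i - 2 * (x i * (\<Sum>v\<in>V. c v * v i))
          + (\<Sum>v\<in>V. c v * v i) * (\<Sum>v\<in>V. c v * v i))"
      unfolding dotB_def y_def by (intro sum.cong) (auto simp: algebra_simps)
    also have "\<dots> = dotB B x x - 2 * (\<Sum>i\<in>B. x i * (\<Sum>v\<in>V. c v * v i))
          + (\<Sum>i\<in>B. (\<Sum>v\<in>V. c v * v i) * (\<Sum>v\<in>V. c v * v i))"
      unfolding dotB_def by (simp add: sum.distrib sum_subtractf sum_distrib_left)
    finally show ?thesis using cross sq by simp
  qed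
  moreover have "(\<Sum>v\<in>V. c v * dotB B x v) = (\<Sum>v\<in>V. (dotB B x v)^2 / dotB B v v)"
    unfolding c_def by (intro sum.cong) (auto simp: power2_eq_square)
  moreover have "(\<Sum>v\<in>V. c v * c v * dotB B v v) = (\<Sum>v\<in>V. (dotB B x v)^2 / dotB B v v)"
    unfolding c_def using pos by (intro sum.cong) (auto simp: power2_eq_square)
  ultimately have "dotB B y y = dotB B x x - (\<Sum>v\<in>V. (dotB B x v)^2 / dotB B v v)" by simp
  with dot_self_nonneg[of B y] show ?thesis by simp
qed

lemma orth_card:
  assumes fB: "finite B" and fV: "finite V"
    and orth: "\<forall>v\<in>V. \<forall>w\<in>V. v \<noteq> w \<longrightarrow> dotB B v w = 0"
    and pos: "\<forall>v\<in>V. dotB B v v > 0"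
  shows "card V \<le> card B"
proof -
  have each: "(\<Sum>v\<in>V. (v j)^2 / dotB B v v) \<le> 1" if "j \<in> B" for j
  proof -
    define e where "e i = (if i = j then 1 else (0::real))" for i
    have "dotB B e v = v j" for v
    proof -
      have "dotB B e v = (\<Sum>i\<in>B. if i = j then v i else 0)"
        unfolding dotB_def e_def by (intro sum.cong) auto
      thus ?thesis using fB that by simp
    qed
    moreover have "dotB B e e = 1"
    proof -
      have "dotB B e e = (\<Sum>i\<in>B. if i = j then 1 else 0)"
        unfolding dotB_def e_def by (intro sum.cong) auto
      thus ?thesis using fB that by simp
    qed
    ultimately show ?thesis using bessel[OF fB fV orth pos, of e] by simp
  qed
  have "(\<Sum>j\<in>B. \<Sum>v\<in>V. (v j)^2 / dotB B v v) \<le> (\<Sum>j\<in>B. 1)"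
    using each by (intro sum_mono) auto
  moreover have "(\<Sum>j\<in>B. \<Sum>v\<in>V. (v j)^2 / dotB B v v) = (\<Sum>v\<in>V. \<Sum>j\<in>B. (v j)^2 / dotB B v v)"
    by (rule sum.swap)
  moreover have "\<dots> = (\<Sum>v\<in>V. dotB B v v / dotB B v v)"
    by (intro sum.cong refl) (simp add: sum_divide_distrib[symmetric] dotB_def power2_eq_square)
  moreover have "(\<Sum>v\<in>V. dotB B v v / dotB B v v) = (\<Sum>v\<in>V. 1)"
    using pos by (intro sum.cong) auto
  ultimately show ?thesis by simp
qed

lemma eigvec_quad:
  assumes "\<forall>j\<in>B. (\<Sum>k\<in>B. A j k * v k) = e * v j"
  shows "quadf A B v = e * dotB B v v"
  unfolding quadf_def dotB_def using assms by (simp add: sum_distrib_left mult_ac)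

lemma eigvec_pos:
  assumes "finite B" "\<exists>j\<in>B. v j \<noteq> 0"
  shows "dotB B v v > 0"
  using dot_self_nonneg[of B v] dot_self_zero[OF assms(1), of v] assms(2)
  by (metis order_le_less)

lemma eig_finite:
  fixes A :: "nat\<Rightarrow>nat\<Rightarrow>real"
  assumes fB: "finite B" and sym: "\<forall>j\<in>B. \<forall>k\<in>B. A j k = A k j"
  shows "finite {e. is_eig A B e}"
proof (rule ccontr)
  let ?E = "{e. is_eig A B e}"
  assume "infinite ?E"
  then obtain F where F: "finite F" "card F = Suc (card B)" "F \<subseteq> ?E"
    using infinite_arbitrarily_large by blast
  define P where "P e v \<longleftrightarrow> (\<forall>j. j \<notin> B \<longrightarrow> v j = 0) \<and> (\<exists>j\<in>B. v j \<noteq> 0) \<and>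
      (\<forall>j\<in>B. (\<Sum>k\<in>B. A j k * v k) = e * v j)" for e v
  define vec where "vec e = (SOME v. P e v)" for e
  have vp: "P e (vec e)" if "e \<in> F" for e
  proof -
    have "\<exists>v. P e v" using F(3) that unfolding P_def is_eig_def by auto
    thus ?thesis unfolding vec_def by (rule someI_ex)
  qed
  have pos: "dotB B (vec e) (vec e) > 0" if "e \<in> F" for e
    using vp[OF that] eigvec_pos[OF fB] unfolding P_def by blast
  have orth: "dotB B (vec e) (vec e') = 0" if "e \<in> F" "e' \<in> F" "e \<noteq> e'" for e e'
  proof -
    let ?v = "vec e" and ?w = "vec e'"
    have ev: "\<forall>j\<in>B. (\<Sum>k\<in>B. A j k * ?v k) = e * ?v j" using vp[OF that(1)] unfolding P_def by blast
    have ew: "\<forall>j\<in>B. (\<Sum>k\<in>B. A j k * ?w k) = e' * ?w j" using vp[OF that(2)] unfolding P_def by blast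
    have "e * dotB B ?v ?w = (\<Sum>j\<in>B. ?w j * (\<Sum>k\<in>B. A j k * ?v k))"
      unfolding dotB_def using ev by (simp add: sum_distrib_left mult_ac)
    also have "\<dots> = (\<Sum>k\<in>B. ?v k * (\<Sum>j\<in>B. A k j * ?w j))" by (rule sym_swap[OF sym])
    also have "\<dots> = e' * dotB B ?v ?w"
      unfolding dotB_def using ew by (simp add: sum_distrib_left mult_ac)
    finally have "(e - e') * dotB B ?v ?w = 0" by (simp add: algebra_simps)
    thus ?thesis using that(3) by simp
  qed
  have inj: "inj_on vec F"
  proof (rule inj_onI)
    fix e e' assume a: "e \<in> F" "e' \<in> F" "vec e = vec e'"
    obtain j where j: "j \<in> B" "vec e j \<noteq> 0" using vp[OF a(1)] unfolding P_def by blast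
    have "e * vec e j = e' * vec e j"
      using vp[OF a(1)] vp[OF a(2)] j(1) a(3) unfolding P_def by metis
    thus "e = e'" using j(2) by simp
  qed
  have "card (vec ` F) \<le> card B"
    apply (rule orth_card[OF fB])
    using F(1) apply simp
    using orth inj apply (auto)[1]
    using pos by auto
  moreover have "card (vec ` F) = Suc (card B)" using card_image[OF inj] F(2) by simp
  ultimately show False by simp
qed

lemma quad_expand:
  fixes A :: "nat\<Rightarrow>nat\<Rightarrow>real"
  assumes sym: "\<forall>j\<in>B. \<forall>k\<in>B. A j k = A k j"
  shows "quadf A B (\<lambda>i. x i + t * y i) = quadf A B x + 2*t*(\<Sum>j\<in>B. y j * (\<Sum>k\<in>B. A j k * x k)) + t^2 * quadf A B y"
proof -
  have inner: "(\<Sum>k\<in>B. A j k * (x k + t * y k)) = (\<Sum>k\<in>B. A j k * x k) + t * (\<Sum>k\<in>B. A j k * y k)" for j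
    by (simp add: algebra_simps sum.distrib sum_distrib_left)
  have "quadf A B (\<lambda>i. x i + t * y i) = (\<Sum>j\<in>B. x j * (\<Sum>k\<in>B. A j k * x k) + t * (x j * (\<Sum>k\<in>B. A j k * y k))
     + t * (y j * (\<Sum>k\<in>B. A j k * x k)) + t^2 * (y j * (\<Sum>k\<in>B. A j k * y k)))"
    unfolding quadf_def inner by (intro sum.cong refl) (simp add: algebra_simps power2_eq_square)
  also have "\<dots> = quadf A B x + t * (\<Sum>j\<in>B. x j * (\<Sum>k\<in>B. A j k * y k))
     + t * (\<Sum>j\<in>B. y j * (\<Sum>k\<in>B. A j k * x k)) + t^2 * quadf A B y"
    unfolding quadf_def by (simp add: sum.distrib sum_distrib_left)
  also have "(\<Sum>j\<in>B. x j * (\<Sum>k\<in>B. A j k * y k)) = (\<Sum>j\<in>B. y j * (\<Sum>k\<in>B. A j k * x k))"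
    by (rule sym_swap[OF sym])
  finally show ?thesis by simp
qed

lemma dot_expand:
  "dotB B (\<lambda>i. x i + t * y i) (\<lambda>i. x i + t * y i) = dotB B x x + 2*t*dotB B x y + t^2 * dotB B y y"
proof -
  have "dotB B (\<lambda>i. x i + t * y i) (\<lambda>i. x i + t * y i) = (\<Sum>j\<in>B. x j * x j + 2*t*(x j * y j) + t^2 * (y j * y j))"
    unfolding dotB_def by (intro sum.cong refl) (simp add: algebra_simps power2_eq_square)
  also have "\<dots> = dotB B x x + 2*t*dotB B x y + t^2 * dotB B y y"
    unfolding dotB_def by (simp add: sum.distrib sum_distrib_left)
  finally show ?thesis .
qed

lemma cont_coord [continuous_intros]: "continuous_on S (\<lambda>x::nat\<Rightarrow>real. x i)"
  by (rule continuous_on_subset[OF continuous_on_product_coordinates]) simp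

lemma quad_cont: "continuous_on S (quadf A B)"
  unfolding quadf_def by (intro continuous_intros)

lemma dot_cont: "continuous_on S (\<lambda>x. dotB B x x)"
  unfolding dotB_def by (intro continuous_intros)

lemma quad_zero:
  assumes "\<forall>j\<in>B. x j = 0" shows "quadf A B x = 0"
  unfolding quadf_def using assms by simp

lemma rayleigh_min:
  fixes A :: "nat\<Rightarrow>nat\<Rightarrow>real"
  assumes fB: "finite B" and ne: "B \<noteq> {}" and sym: "\<forall>j\<in>B. \<forall>k\<in>B. A j k = A k j"
  shows "\<exists>\<mu>. is_eig A B \<mu> \<and> (\<forall>x. \<mu> * dotB B x x \<le> quadf A B x)"
proof -
  define K0 where "K0 = PiE UNIV (\<lambda>i. if i \<in> B then {-1..1::real} else {0})"
  have "compactin (product_topology (\<lambda>i. euclidean) UNIV) K0"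
    unfolding K0_def compactin_PiE by auto
  hence cK0: "compact K0" by (simp add: euclidean_product_topology)
  define Sph where "Sph = K0 \<inter> {x. dotB B x x = 1}"
  have "closed {x. dotB B x x = 1}"
    by (rule closed_Collect_eq) (auto intro: dot_cont continuous_intros)
  hence cS: "compact Sph" unfolding Sph_def using cK0 by (rule compact_Int_closed[rotated])
  obtain b where b: "b \<in> B" using ne by blast
  define eb where "eb i = (if i = b then 1 else (0::real))" for i
  have "dotB B eb eb = (\<Sum>i\<in>B. if i = b then 1 else 0)"
    unfolding dotB_def eb_def by (intro sum.cong) auto
  hence "dotB B eb eb = 1" using fB b by simp
  moreover have "eb \<in> K0" unfolding K0_def eb_def using b by auto
  ultimately have "Sph \<noteq> {}" unfolding Sph_def by blast
  then obtain v0 where v0: "v0 \<in> Sph" and vmin: "\<forall>y\<in>Sph. quadf A B v0 \<le> quadf A B y"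
    using continuous_attains_inf[OF cS _ quad_cont] by blast
  define \<mu> where "\<mu> = quadf A B v0"
  have v0n: "dotB B v0 v0 = 1" using v0 unfolding Sph_def by auto
  have v0s: "\<forall>j. j \<notin> B \<longrightarrow> v0 j = 0"
  proof (intro allI impI)
    fix j assume "j \<notin> B"
    moreover have "v0 \<in> K0" using v0 unfolding Sph_def by auto
    ultimately show "v0 j = 0" unfolding K0_def by (auto simp: PiE_iff dest: spec[of _ j])
  qed
  have ray: "\<mu> * dotB B x x \<le> quadf A B x" for x
  proof (cases "dotB B x x = 0")
    case True
    hence "\<forall>j\<in>B. x j = 0" using dot_self_zero[OF fB] by blast
    thus ?thesis using True quad_zero by simp
  next
    case False
    define d where "d = dotB B x x"
    have dpos: "d > 0" using False dot_self_nonneg[of B x] unfolding d_def by simp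
    define y where "y i = (if i \<in> B then x i / sqrt d else 0)" for i
    have "dotB B y y = (\<Sum>j\<in>B. x j * x j / d)"
      unfolding dotB_def y_def using dpos by (intro sum.cong refl) (simp add: real_sqrt_mult[symmetric])
    also have "\<dots> = 1" using dpos unfolding d_def dotB_def by (simp add: sum_divide_distrib[symmetric])
    finally have yn: "dotB B y y = 1" .
    have "y \<in> K0"
      unfolding K0_def
    proof (rule PiE_I)
      fix i
      show "y i \<in> (if i \<in> B then {-1..1} else {0})"
      proof (cases "i \<in> B")
        case True
        have "(y i)^2 \<le> 1" using coord_le_dot[OF fB True, of y] yn by simp
        hence "\<bar>y i\<bar> \<le> 1" by (simp add: abs_square_le_1)
        thus ?thesis using True by auto
      qed (simp add: y_def)
    qed simp
    hence "y \<in> Sph" using yn unfolding Sph_def by auto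
    hence le: "\<mu> \<le> quadf A B y" using vmin unfolding \<mu>_def by blast
    have "quadf A B y = (\<Sum>j\<in>B. x j * (\<Sum>k\<in>B. A j k * x k) / d)"
      unfolding quadf_def y_def using dpos
      by (intro sum.cong refl) (simp add: sum_divide_distrib[symmetric] real_sqrt_mult[symmetric] sum_distrib_left[symmetric])
    also have "\<dots> = quadf A B x / d" unfolding quadf_def by (simp add: sum_divide_distrib[symmetric])
    finally have "\<mu> \<le> quadf A B x / d" using le by simp
    thus ?thesis using dpos unfolding d_def by (simp add: pos_le_divide_eq)
  qed
  define r where "r j = (\<Sum>k\<in>B. A j k * v0 k) - \<mu> * v0 j" for j
  define c where "c = quadf A B r - \<mu> * dotB B r r"
  define R where "R = dotB B r r"
  have key: "0 \<le> 2 * t * R + t^2 * c" for t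
  proof -
    have "0 \<le> quadf A B (\<lambda>i. v0 i + t * r i) - \<mu> * dotB B (\<lambda>i. v0 i + t * r i) (\<lambda>i. v0 i + t * r i)"
      using ray by simp
    also have "\<dots> = 2*t*((\<Sum>j\<in>B. r j * (\<Sum>k\<in>B. A j k * v0 k)) - \<mu> * dotB B v0 r) + t^2 * c"
      unfolding quad_expand[OF sym] dot_expand c_def using v0n \<mu>_def by (simp add: algebra_simps)
    also have "(\<Sum>j\<in>B. r j * (\<Sum>k\<in>B. A j k * v0 k)) - \<mu> * dotB B v0 r = R"
      unfolding R_def dotB_def r_def by (simp add: sum_distrib_left sum_subtractf[symmetric] algebra_simps)
    finally show ?thesis .
  qed
  have R0: "R = 0"
  proof (rule ccontr)
    assume "R \<noteq> 0"
    hence Rp: "R > 0" using dot_self_nonneg[of B r] unfolding R_def by simp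
    define a where "a = \<bar>c\<bar> + 1"
    have ap: "a > 0" unfolding a_def by simp
    have "0 \<le> 2 * (-R/a) * R + (-R/a)^2 * c" by (rule key)
    also have "(-R/a)^2 * c \<le> (R/a)^2 * a"
    proof -
      have "(-R/a)^2 = (R/a)^2" by (simp add: power2_eq_square)
      moreover have "c \<le> a" unfolding a_def by simp
      ultimately show ?thesis by (simp add: mult_left_mono)
    qed
    also have "2 * (-R/a) * R + (R/a)^2 * a = - (R * R / a)"
      using ap by (simp add: power2_eq_square field_simps)
    finally have "R * R / a \<le> 0" by simp
    moreover have "R * R / a > 0" using Rp ap by simp
    ultimately show False by simp
  qed
  have "\<forall>j\<in>B. r j = 0" using dot_self_zero[OF fB R0[unfolded R_def]] by blast
  hence eq: "\<forall>j\<in>B. (\<Sum>k\<in>B. A j k * v0 k) = \<mu> * v0 j" unfolding r_def by simp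
  have "\<exists>j\<in>B. v0 j \<noteq> 0"
  proof (rule ccontr)
    assume "\<not> ?thesis"
    hence "dotB B v0 v0 = 0" unfolding dotB_def by simp
    thus False using v0n by simp
  qed
  hence "is_eig A B \<mu>" unfolding is_eig_def using v0s eq by blast
  thus ?thesis using ray by blast
qed

lemma eig_lower:
  assumes fB: "finite B" and e: "is_eig A B e" and lo: "\<forall>x. l * dotB B x x \<le> quadf A B x"
  shows "l \<le> e"
proof -
  obtain v where v: "\<exists>j\<in>B. v j \<noteq> 0" "\<forall>j\<in>B. (\<Sum>k\<in>B. A j k * v k) = e * v j"
    using e unfolding is_eig_def by blast
  have "l * dotB B v v \<le> e * dotB B v v" using lo eigvec_quad[OF v(2)] by metis
  thus ?thesis using eigvec_pos[OF fB v(1)] by simp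
qed

lemma eig_upper:
  assumes fB: "finite B" and e: "is_eig A B e" and hi: "\<forall>x. quadf A B x \<le> h * dotB B x x"
  shows "e \<le> h"
proof -
  obtain v where v: "\<exists>j\<in>B. v j \<noteq> 0" "\<forall>j\<in>B. (\<Sum>k\<in>B. A j k * v k) = e * v j"
    using e unfolding is_eig_def by blast
  have "e * dotB B v v \<le> h * dotB B v v" using hi eigvec_quad[OF v(2)] by metis
  thus ?thesis using eigvec_pos[OF fB v(1)] by simp
qed

lemma phi_min_props:
  fixes A :: "nat\<Rightarrow>nat\<Rightarrow>real"
  assumes fB: "finite B" and ne: "B \<noteq> {}" and sym: "\<forall>j\<in>B. \<forall>k\<in>B. A j k = A k j"
  shows "is_eig A B (phi_min A B) \<and> (\<forall>x. phi_min A B * dotB B x x \<le> quadf A B x)"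
proof -
  obtain \<mu> where m: "is_eig A B \<mu>" "\<forall>x. \<mu> * dotB B x x \<le> quadf A B x"
    using rayleigh_min[OF fB ne sym] by blast
  have "phi_min A B = \<mu>" unfolding phi_min_def
    by (rule Min_eqI) (use eig_finite[OF fB sym] m eig_lower[OF fB] in auto)
  thus ?thesis using m by simp
qed

lemma eig_neg: "is_eig (\<lambda>j k. - A j k) B e \<longleftrightarrow> is_eig A B (- e)"
proof -
  have "(\<Sum>k\<in>B. - A j k * v k) = e * v j \<longleftrightarrow> (\<Sum>k\<in>B. A j k * v k) = - e * v j" for j v
    by (auto simp: sum_negf)
  thus ?thesis unfolding is_eig_def by simp
qed

lemma phi_max_props:
  fixes A :: "nat\<Rightarrow>nat\<Rightarrow>real"
  assumes fB: "finite B" and ne: "B \<noteq> {}" and sym: "\<forall>j\<in>B. \<forall>k\<in>B. A j k = A k j"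
  shows "is_eig A B (phi_max A B) \<and> (\<forall>x. quadf A B x \<le> phi_max A B * dotB B x x)"
proof -
  have sym': "\<forall>j\<in>B. \<forall>k\<in>B. - A j k = - A k j" using sym by simp
  obtain \<mu> where m: "is_eig (\<lambda>j k. - A j k) B \<mu>" "\<forall>x. \<mu> * dotB B x x \<le> quadf (\<lambda>j k. - A j k) B x"
    using rayleigh_min[OF fB ne sym'] by blast
  have qn: "quadf (\<lambda>j k. - A j k) B x = - quadf A B x" for x
    unfolding quadf_def by (simp add: sum_negf)
  have e1: "is_eig A B (-\<mu>)" using m(1) eig_neg by auto
  have up: "\<forall>x. quadf A B x \<le> (-\<mu>) * dotB B x x"
  proof
    fix x have "\<mu> * dotB B x x \<le> - quadf A B x" using m(2) qn by metis
    thus "quadf A B x \<le> (-\<mu>) * dotB B x x" by linarith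
  qed
  have "phi_max A B = -\<mu>" unfolding phi_max_def
    by (rule Max_eqI) (use eig_finite[OF fB sym] e1 up eig_upper[OF fB] in auto)
  thus ?thesis using e1 up by simp
qed

definition restr :: "nat set \<Rightarrow> (nat \<Rightarrow> real) \<Rightarrow> nat \<Rightarrow> real" where
  "restr B x = (\<lambda>j. if j \<in> B then x j else 0)"

lemma restr_quad:
  assumes "finite P" "B \<subseteq> P"
  shows "quadf A P (restr B x) = quadf A B x"
proof -
  have "quadf A P (restr B x) = (\<Sum>j\<in>B. restr B x j * (\<Sum>k\<in>P. A j k * restr B x k))"
    unfolding quadf_def by (rule sum.mono_neutral_right) (use assms in \<open>auto simp: restr_def\<close>)
  also have "\<dots> = (\<Sum>j\<in>B. restr B x j * (\<Sum>k\<in>B. A j k * restr B x k))"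
  proof -
    have inner: "(\<Sum>k\<in>P. A j k * restr B x k) = (\<Sum>k\<in>B. A j k * restr B x k)" for j
      by (rule sum.mono_neutral_right) (use assms in \<open>auto simp: restr_def\<close>)
    show ?thesis by (simp add: inner)
  qed
  also have "\<dots> = quadf A B x" unfolding quadf_def restr_def by simp
  finally show ?thesis .
qed

lemma restr_dot:
  assumes "finite P" "B \<subseteq> P"
  shows "dotB P (restr B x) (restr B x) = dotB B x x"
proof -
  have "dotB P (restr B x) (restr B x) = (\<Sum>j\<in>B. restr B x j * restr B x j)"
    unfolding dotB_def by (rule sum.mono_neutral_right) (use assms in \<open>auto simp: restr_def\<close>)
  thus ?thesis unfolding dotB_def restr_def by simp
qed

lemma quad_perturb:
  fixes A A' :: "nat\<Rightarrow>nat\<Rightarrow>real"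
  assumes "\<forall>j k. \<bar>A j k - A' j k\<bar> \<le> lam"
  shows "\<bar>quadf A B x - quadf A' B x\<bar> \<le> lam * (l1_on x B)^2"
proof -
  have "quadf A B x - quadf A' B x = (\<Sum>j\<in>B. \<Sum>k\<in>B. x j * (A j k - A' j k) * x k)"
    unfolding quadf_def by (simp add: sum_subtractf[symmetric] sum_distrib_left algebra_simps)
  also have "\<bar>\<dots>\<bar> \<le> (\<Sum>j\<in>B. \<Sum>k\<in>B. \<bar>x j * (A j k - A' j k) * x k\<bar>)"
    by (rule order_trans[OF sum_abs]) (intro sum_mono sum_abs)
  also have "\<dots> \<le> (\<Sum>j\<in>B. \<Sum>k\<in>B. \<bar>x j\<bar> * lam * \<bar>x k\<bar>)"
    using assms by (intro sum_mono) (auto simp: abs_mult intro!: mult_right_mono mult_left_mono)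
  also have "\<dots> = lam * (l1_on x B)^2"
    unfolding l1_on_def power2_eq_square by (simp add: sum_product sum_distrib_left mult_ac)
  finally show ?thesis .
qed

lemma l1_cs:
  assumes "finite B"
  shows "(l1_on x B)^2 \<le> real (card B) * dotB B x x"
proof -
  have "(l1_on x B)^2 = (\<Sum>j\<in>B. \<Sum>k\<in>B. \<bar>x j\<bar> * \<bar>x k\<bar>)"
    unfolding l1_on_def power2_eq_square by (simp add: sum_product)
  also have "\<dots> \<le> (\<Sum>j\<in>B. \<Sum>k\<in>B. (x j * x j + x k * x k) / 2)"
  proof (intro sum_mono)
    fix j k
    have "0 \<le> (\<bar>x j\<bar> - \<bar>x k\<bar>)^2" by simp
    thus "\<bar>x j\<bar> * \<bar>x k\<bar> \<le> (x j * x j + x k * x k) / 2"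
      by (simp add: power2_eq_square algebra_simps abs_mult_self_eq)
  qed
  also have "\<dots> = real (card B) * dotB B x x"
    unfolding dotB_def by (simp add: sum_divide_distrib[symmetric] sum.distrib sum_distrib_left[symmetric]
        sum_distrib_right[symmetric] algebra_simps) (simp add: sum_distrib_left mult_ac)
  finally show ?thesis .
qed

lemma gram_sym: "gram n X j k = gram n X k j"
  unfolding gram_def by (simp add: mult.commute)

lemma sig_sym: "sigma_hat n X lam j k = sigma_hat n X lam k j"
  unfolding sigma_hat_def using gram_sym by metis

lemma gram_diag: "0 < n \<Longrightarrow> (\<Sum>i<n. (X i j)\<^sup>2) = real n \<Longrightarrow> gram n X j j = 1"
  unfolding gram_def by (simp add: power2_eq_square)

lemma gram_sig_diff: "0 \<le> lam \<Longrightarrow> \<bar>gram n X j k - sigma_hat n X lam j k\<bar> \<le> lam"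
  unfolding sigma_hat_def by auto

lemma norm_quad:
  assumes "0 < n"
  shows "(norm_Xu n p X u)^2 = real n * quadf (gram n X) {0..<p} u"
proof -
  have "(norm_Xu n p X u)^2 = (\<Sum>i<n. (\<Sum>j<p. X i j * u j)\<^sup>2)"
    unfolding norm_Xu_def by (simp add: sum_nonneg)
  also have "\<dots> = (\<Sum>i<n. \<Sum>j<p. \<Sum>k<p. u j * (X i j * X i k) * u k)"
    by (simp add: power2_eq_square sum_product mult_ac)
  also have "\<dots> = (\<Sum>j<p. \<Sum>k<p. \<Sum>i<n. u j * (X i j * X i k) * u k)"
    by (simp add: sum.swap[of _ "{..<n}"])
  also have "\<dots> = real n * quadf (gram n X) {0..<p} u"
  proof -
    have "quadf (gram n X) {0..<p} u = (\<Sum>j<p. \<Sum>k<p. (\<Sum>i<n. u j * (X i j * X i k) * u k) / real n)"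
      unfolding quadf_def gram_def atLeast0LessThan
      by (simp add: sum_distrib_left sum_distrib_right mult_ac)
    also have "\<dots> = (\<Sum>j<p. \<Sum>k<p. \<Sum>i<n. u j * (X i j * X i k) * u k) / real n"
      by (simp add: sum_divide_distrib)
    finally show ?thesis using assms by simp
  qed
  finally show ?thesis .
qed

lemma l1_split:
  assumes "finite P" "S \<subseteq> P"
  shows "l1_on u P = l1_on u S + l1_on u (P - S)"
  unfolding l1_on_def using assms by (simp add: sum.subset_diff)

lemma l1_nonneg: "0 \<le> l1_on u A"
  unfolding l1_on_def by (simp add: sum_nonneg)

lemma dot_mono:
  assumes "finite P" "S \<subseteq> P" shows "dotB S x x \<le> dotB P x x"
  unfolding dotB_def using assms by (intro sum_mono2) auto

lemma part1:
  fixes X :: "nat \<Rightarrow> nat \<Rightarrow> real"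
  assumes n: "0 < n" and p: "0 < p" and lam: "0 \<le> lam" and xi: "0 < \<xi>" and c: "0 < c"
    and hmin: "c \<le> phi_min (sigma_hat n X lam) {0..<p}"
    and hs: "s * lam * (1 + \<xi>)\<^sup>2 \<le> c / 2"
    and S: "S \<noteq> {}" "S \<subseteq> {0..<p}" "real (card S) \<le> s"
  shows "c / 2 \<le> (compat n p X \<xi> S)\<^sup>2"
proof -
  let ?P = "{0..<p::nat}"
  let ?G = "gram n X" and ?H = "sigma_hat n X lam"
  have fS: "finite S" using S(2) finite_subset by blast
  have cS: "card S > 0" using S(1) fS by (simp add: card_gt_0_iff)
  have Hprops: "\<forall>x. phi_min ?H ?P * dotB ?P x x \<le> quadf ?H ?P x"
    using phi_min_props[of ?P ?H] p sig_sym by auto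
  define T where "T = {norm_Xu n p X u * sqrt (real (card S)) / (sqrt (real n) * l1_on u S)
      | u. u \<in> cone p \<xi> S \<and> u \<noteq> (\<lambda>_. 0)}"
  have lowT: "sqrt (c/2) \<le> t" if tT: "t \<in> T" for t
  proof -
    obtain u where u: "t = norm_Xu n p X u * sqrt (real (card S)) / (sqrt (real n) * l1_on u S)"
      "u \<in> cone p \<xi> S" "u \<noteq> (\<lambda>_. 0)"
      using tT unfolding T_def by force
    have uout: "\<forall>j. p \<le> j \<longrightarrow> u j = 0" and ucone: "l1_on u (?P - S) \<le> \<xi> * l1_on u S"
      using u(2) unfolding cone_def by auto
    have l1S: "l1_on u S > 0"
    proof (rule ccontr)
      assume "\<not> ?thesis"
      hence z: "l1_on u S = 0" using l1_nonneg[of u S] by simp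
      hence "l1_on u (?P - S) = 0" using ucone l1_nonneg[of u "?P - S"] by simp
      hence "l1_on u ?P = 0" using l1_split[of ?P S u] S(2) z by simp
      hence "\<forall>j\<in>?P. \<bar>u j\<bar> = 0" unfolding l1_on_def by (subst sum_nonneg_eq_0_iff[symmetric]) auto
      hence "u = (\<lambda>_. 0)" using uout by (intro ext) (metis abs_0_eq atLeastLessThan_iff not_le zero_le)
      thus False using u(3) by simp
    qed
    define L where "L = l1_on u S"
    define q where "q = quadf ?G ?P u"
    have lP: "l1_on u ?P \<le> (1 + \<xi>) * L"
      using l1_split[of ?P S u] S(2) ucone unfolding L_def by (simp add: algebra_simps)
    have lP2: "(l1_on u ?P)^2 \<le> (1 + \<xi>)^2 * L^2"
      using power_mono[OF lP l1_nonneg, of 2] by (simp add: power_mult_distrib)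
    have pert: "quadf ?H ?P u - lam * (l1_on u ?P)^2 \<le> q"
      using quad_perturb[of ?G ?H lam ?P u] gram_sig_diff[OF lam] unfolding q_def by auto
    have Hq: "c * dotB ?P u u \<le> quadf ?H ?P u"
      using Hprops hmin dot_self_nonneg[of ?P u] by (meson mult_right_mono order_trans)
    have NS: "L^2 \<le> real (card S) * dotB ?P u u"
    proof -
      have "dotB S u u \<le> dotB ?P u u" using dot_mono[of ?P S u] S(2) by simp
      hence "real (card S) * dotB S u u \<le> real (card S) * dotB ?P u u" by (simp add: mult_left_mono)
      thus ?thesis using l1_cs[OF fS, of u] unfolding L_def by linarith
    qed
    have "c * L^2 \<le> real (card S) * (c * dotB ?P u u)"
      using mult_left_mono[OF NS, of c] c by (simp add: mult_ac)
    also have "\<dots> \<le> real (card S) * (q + lam * (l1_on u ?P)^2)"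
      using pert Hq by (intro mult_left_mono) auto
    also have "\<dots> \<le> real (card S) * q + real (card S) * lam * ((1 + \<xi>)^2 * L^2)"
      using lP2 lam by (simp add: algebra_simps mult_left_mono)
    also have "real (card S) * lam * ((1 + \<xi>)^2 * L^2) \<le> (c/2) * L^2"
    proof -
      have "real (card S) * lam * (1 + \<xi>)^2 \<le> s * lam * (1 + \<xi>)^2"
        using S(3) lam by (intro mult_right_mono) auto
      hence "real (card S) * lam * (1 + \<xi>)^2 \<le> c/2" using hs by linarith
      from mult_right_mono[OF this, of "L^2"] show ?thesis by (simp add: mult_ac)
    qed
    finally have key: "(c/2) * L^2 \<le> real (card S) * q" by simp
    have nq: "(norm_Xu n p X u)^2 = real n * q" using norm_quad[OF n] unfolding q_def by simp
    have "t^2 = real n * q * real (card S) / (real n * L^2)"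
      unfolding u(1) L_def[symmetric] using n by (simp add: power_mult_distrib power_divide nq)
    also have "\<dots> = real (card S) * q / L^2" using n by (simp add: mult_ac)
    finally have "c/2 \<le> t^2" using key l1S unfolding L_def[symmetric]
      by (simp add: pos_le_divide_eq mult_ac)
    moreover have "0 \<le> t" unfolding u(1) using l1S
      by (intro divide_nonneg_pos mult_nonneg_nonneg) (auto simp: norm_Xu_def sum_nonneg n)
    ultimately show ?thesis by (simp add: real_le_lsqrt)
  qed
  obtain b where b: "b \<in> S" using S(1) by blast
  define eb where "eb j = (if j = b then 1 else (0::real))" for j
  have "l1_on eb (?P - S) = 0" unfolding l1_on_def eb_def using b by (intro sum.neutral) auto
  moreover have "l1_on eb S = 1"
  proof -
    have "l1_on eb S = (\<Sum>j\<in>S. if j = b then 1 else 0)"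
      unfolding l1_on_def eb_def by (intro sum.cong) auto
    thus ?thesis using fS b by simp
  qed
  moreover have "\<forall>j. p \<le> j \<longrightarrow> eb j = 0" unfolding eb_def using b S(2) by auto
  ultimately have "eb \<in> cone p \<xi> S" unfolding cone_def using xi by auto
  moreover have "eb \<noteq> (\<lambda>_. 0)" unfolding eb_def by (metis zero_neq_one)
  ultimately have "T \<noteq> {}" unfolding T_def by blast
  hence "sqrt (c/2) \<le> Inf T" using lowT by (intro cInf_greatest) auto
  hence "sqrt (c/2) \<le> compat n p X \<xi> S" unfolding compat_def T_def .
  moreover have "0 \<le> sqrt (c/2)" using assms(5) by simp
  ultimately have "(sqrt (c/2))^2 \<le> (compat n p X \<xi> S)^2" by (rule power_mono)
  moreover have "(sqrt (c/2))^2 = c/2" using assms(5) by simp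
  ultimately show ?thesis by simp
qed

lemma quad_unit:
  assumes "finite B" "j \<in> B"
  shows "quadf A B (\<lambda>k. if k = j then 1 else 0) = A j j" and "dotB B (\<lambda>k. if k = j then 1 else 0) (\<lambda>k. if k = j then 1 else 0) = 1"
proof -
  have inner: "(\<Sum>k\<in>B. A i k * (if k = j then 1 else 0)) = A i j" for i
  proof -
    have "(\<Sum>k\<in>B. A i k * (if k = j then 1 else 0)) = (\<Sum>k\<in>B. if k = j then A i k else 0)"
      by (intro sum.cong) auto
    thus ?thesis using assms by simp
  qed
  have "quadf A B (\<lambda>k. if k = j then 1 else 0) = (\<Sum>i\<in>B. if i = j then A i j else 0)"
    unfolding quadf_def inner by (intro sum.cong) auto
  thus "quadf A B (\<lambda>k. if k = j then 1 else 0) = A j j" using assms by simp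
  have "dotB B (\<lambda>k. if k = j then 1 else 0) (\<lambda>k. if k = j then 1 else 0) = (\<Sum>i\<in>B. if i = j then 1 else 0)"
    unfolding dotB_def by (intro sum.cong) auto
  thus "dotB B (\<lambda>k. if k = j then 1 else 0) (\<lambda>k. if k = j then 1 else (0::real)) = 1" using assms by simp
qed

lemma part_minus:
  fixes X :: "nat \<Rightarrow> nat \<Rightarrow> real"
  assumes p: "0 < p" and lam: "0 \<le> lam" and c: "0 < c"
    and hmin: "c \<le> phi_min (sigma_hat n X lam) {0..<p}"
    and S: "S \<noteq> {}" "S \<subseteq> {0..<p}"
    and hb: "lam * (real (card S) + real m) \<le> c / 2"
  shows "c / 2 \<le> phi_minus n p X m S"
proof -
  let ?P = "{0..<p::nat}"
  let ?G = "gram n X" and ?H = "sigma_hat n X lam"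
  have Hprops: "\<forall>x. phi_min ?H ?P * dotB ?P x x \<le> quadf ?H ?P x"
    using phi_min_props[of ?P ?H] p sig_sym by auto
  define I where "I = {B. S \<subseteq> B \<and> B \<subseteq> ?P \<and> card (B - S) \<le> m}"
  have each: "c / 2 \<le> phi_min ?G B" if BI: "B \<in> I" for B
  proof -
    have B: "S \<subseteq> B" "B \<subseteq> ?P" "card (B - S) \<le> m" using BI unfolding I_def by auto
    have fB: "finite B" using B(2) finite_subset by blast
    have neB: "B \<noteq> {}" using B(1) S(1) by blast
    have cardB: "real (card B) \<le> real (card S) + real m"
    proof -
      have "card B = card S + card (B - S)" using fB B(1)
        by (metis card_Diff_subset card_mono add_diff_inverse_nat finite_subset not_less)
      thus ?thesis using B(3) by simp
    qed
    have low: "\<forall>x. (c/2) * dotB B x x \<le> quadf ?G B x"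
    proof
      fix x
      let ?x = "restr B x"
      have N0: "0 \<le> dotB B x x" by (rule dot_self_nonneg)
      have "\<bar>quadf ?G B x - quadf ?H B x\<bar> \<le> lam * (l1_on x B)^2"
        using quad_perturb[of ?G ?H lam B x] gram_sig_diff[OF lam] by auto
      moreover have "lam * (l1_on x B)^2 \<le> lam * (real (card B) * dotB B x x)"
        using l1_cs[OF fB, of x] lam by (simp add: mult_left_mono)
      moreover have "lam * (real (card B) * dotB B x x) \<le> (c/2) * dotB B x x"
      proof -
        have "lam * real (card B) \<le> c/2" using cardB lam hb
          by (meson mult_left_mono order_trans)
        from mult_right_mono[OF this N0] show ?thesis by (simp add: mult_ac)
      qed
      moreover have "c * dotB B x x \<le> quadf ?H B x"
      proof -
        have "quadf ?H B x = quadf ?H ?P ?x" using restr_quad[of ?P B] B(2) by simp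
        moreover have "dotB B x x = dotB ?P ?x ?x" using restr_dot[of ?P B] B(2) by simp
        moreover have "c * dotB ?P ?x ?x \<le> phi_min ?H ?P * dotB ?P ?x ?x"
          using hmin dot_self_nonneg by (rule mult_right_mono)
        ultimately show ?thesis using Hprops by (metis order_trans)
      qed
      ultimately show "(c/2) * dotB B x x \<le> quadf ?G B x" by (simp add: abs_le_iff) 
    qed
    have "is_eig ?G B (phi_min ?G B)" using phi_min_props[OF fB neB] gram_sym by blast
    thus ?thesis using eig_lower[OF fB _ low] by blast
  qed
  have W: "{phi_min ?G B | B. S \<subseteq> B \<and> B \<subseteq> ?P \<and> card (B - S) \<le> m} = (\<lambda>B. phi_min ?G B) ` I"
    unfolding I_def by blast
  have fI: "finite I" unfolding I_def by (rule finite_subset[of _ "Pow ?P"]) auto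
  have "S \<in> I" unfolding I_def using S by auto
  hence "I \<noteq> {}" by blast
  thus ?thesis unfolding phi_minus_def W by (subst Min_ge_iff) (use fI each in auto)
qed

lemma part_plus:
  fixes X :: "nat \<Rightarrow> nat \<Rightarrow> real"
  assumes n: "0 < n" and p: "0 < p" and lam: "0 \<le> lam" and c: "0 < c"
    and cols: "\<forall>j<p. (\<Sum>i<n. (X i j)\<^sup>2) = real n"
    and hmax: "phi_max (sigma_hat n X lam) {0..<p} \<le> cu"
    and S: "S \<subseteq> {0..<p}" "S \<noteq> {0..<p}"
    and m: "1 \<le> m"
    and hb: "lam * real m \<le> c / 2"
  shows "0 < phi_plus n p X m S \<and> phi_plus n p X m S \<le> cu + c / 2"
proof -
  let ?P = "{0..<p::nat}"
  let ?G = "gram n X" and ?H = "sigma_hat n X lam"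
  have Hprops: "\<forall>x. quadf ?H ?P x \<le> phi_max ?H ?P * dotB ?P x x"
    using phi_max_props[of ?P ?H] p sig_sym by auto
  define I where "I = {B. B \<noteq> {} \<and> B \<subseteq> ?P \<and> B \<inter> S = {} \<and> card B \<le> m}"
  have each: "1 \<le> phi_max ?G B \<and> phi_max ?G B \<le> cu + c / 2" if BI: "B \<in> I" for B
  proof -
    have B: "B \<noteq> {}" "B \<subseteq> ?P" "card B \<le> m" using BI unfolding I_def by auto
    have fB: "finite B" using B(2) finite_subset by blast
    have pr: "is_eig ?G B (phi_max ?G B) \<and> (\<forall>x. quadf ?G B x \<le> phi_max ?G B * dotB B x x)"
      using phi_max_props[OF fB B(1)] gram_sym by blast
    obtain j where j: "j \<in> B" using B(1) by blast
    have "?G j j = 1" using gram_diag[OF n] cols j B(2) by auto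
    moreover have "quadf ?G B (\<lambda>k. if k = j then 1 else 0) \<le> phi_max ?G B * dotB B (\<lambda>k. if k = j then 1 else 0) (\<lambda>k. if k = j then 1 else 0)"
      using pr by blast
    ultimately have "1 \<le> phi_max ?G B" using quad_unit(1)[OF fB j, of ?G] quad_unit(2)[OF fB j] by simp
    moreover have "phi_max ?G B \<le> cu + c/2"
    proof -
      have up: "\<forall>x. quadf ?G B x \<le> (cu + c/2) * dotB B x x"
      proof
        fix x
        let ?x = "restr B x"
        have N0: "0 \<le> dotB B x x" by (rule dot_self_nonneg)
        have "\<bar>quadf ?G B x - quadf ?H B x\<bar> \<le> lam * (l1_on x B)^2"
          using quad_perturb[of ?G ?H lam B x] gram_sig_diff[OF lam] by auto
        moreover have "lam * (l1_on x B)^2 \<le> lam * (real (card B) * dotB B x x)"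
          using l1_cs[OF fB, of x] lam by (simp add: mult_left_mono)
        moreover have "lam * (real (card B) * dotB B x x) \<le> (c/2) * dotB B x x"
        proof -
          have "lam * real (card B) \<le> c/2" using B(3) lam hb
            by (meson mult_left_mono of_nat_le_iff order_trans)
          from mult_right_mono[OF this N0] show ?thesis by (simp add: mult_ac)
        qed
        moreover have "quadf ?H B x \<le> cu * dotB B x x"
        proof -
          have "quadf ?H B x = quadf ?H ?P ?x" using restr_quad[of ?P B] B(2) by simp
          moreover have "dotB B x x = dotB ?P ?x ?x" using restr_dot[of ?P B] B(2) by simp
          moreover have "phi_max ?H ?P * dotB ?P ?x ?x \<le> cu * dotB ?P ?x ?x"
            using hmax dot_self_nonneg by (rule mult_right_mono)
          ultimately show ?thesis using Hprops by (metis order_trans)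
        qed
        ultimately show "quadf ?G B x \<le> (cu + c/2) * dotB B x x" by (simp add: abs_le_iff algebra_simps)
      qed
      show ?thesis using eig_upper[OF fB _ up] pr by blast
    qed
    ultimately show ?thesis by simp
  qed
  have W: "{phi_max ?G B | B. B \<noteq> {} \<and> B \<subseteq> ?P \<and> B \<inter> S = {} \<and> card B \<le> m} = (\<lambda>B. phi_max ?G B) ` I"
    unfolding I_def by blast
  have fI: "finite I" unfolding I_def by (rule finite_subset[of _ "Pow ?P"]) auto
  obtain j where j: "j \<in> ?P" "j \<notin> S" using S by blast
  have "{j} \<in> I" unfolding I_def using j m by auto
  hence neI: "I \<noteq> {}" by blast
  have "phi_plus n p X m S \<le> cu + c/2"
    unfolding phi_plus_def W using fI neI each by (simp add: Max_le_iff)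
  moreover have "1 \<le> phi_plus n p X m S"
    unfolding phi_plus_def W
  proof -
    have "phi_max ?G {j} \<le> Max ((\<lambda>B. phi_max ?G B) ` I)"
      using fI \<open>{j} \<in> I\<close> by (intro Max_ge) auto
    thus "1 \<le> Max ((\<lambda>B. phi_max ?G B) ` I)" using each[OF \<open>{j} \<in> I\<close>] by linarith
  qed
  ultimately show ?thesis by simp
qed

theorem proposition2:
  fixes n p :: nat and X :: "nat \<Rightarrow> nat \<Rightarrow> real"
    and s \<xi> M0 c_low c_up :: real
  assumes "0 < n" and "0 < p"
    and cols: "\<forall>j<p. (\<Sum>i<n. (X i j)\<^sup>2) = real n"
    and "0 < s" and "0 < \<xi>" and "0 < M0" and "0 < c_low" and "0 < c_up"
  defines "lam1 \<equiv> M0 * sqrt (ln (real p) / real n)"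
    and "K \<equiv> 2 * \<xi>\<^sup>2 * (c_up / c_low + 1 / 2)"
  shows
   "(phi_min (sigma_hat n X lam1) {0..<p} \<ge> c_low \<and> s * lam1 * (1 + \<xi>)\<^sup>2 \<le> c_low / 2 \<longrightarrow>
      (\<forall>S. S \<noteq> {} \<and> S \<subseteq> {0..<p} \<and> real (card S) \<le> s \<longrightarrow>
         (compat n p X \<xi> S)\<^sup>2 \<ge> c_low / 2))
    \<and>
    (phi_min (sigma_hat n X lam1) {0..<p} \<ge> c_low \<and> s * lam1 * (1 + \<xi>)\<^sup>2 \<le> c_low / 2 \<and>
     phi_max (sigma_hat n X lam1) {0..<p} \<le> c_up \<and> s * lam1 * (1 + K) + lam1 \<le> c_low / 2 \<longrightarrow>
      (\<forall>S (m::nat). S \<noteq> {} \<and> S \<subseteq> {0..<p} \<and> real (card S) \<le> s \<and>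
          real m - 1 < K * real (card S) \<and> K * real (card S) \<le> real m \<longrightarrow>
         phi_minus n p X m S \<ge> c_low / 2 \<and>
         (compat n p X \<xi> S)\<^sup>2 \<ge> c_low / 2 \<and>
         (S \<noteq> {0..<p} \<longrightarrow> \<xi>\<^sup>2 / (compat n p X \<xi> S)\<^sup>2 \<le> K / phi_plus n p X m S)))"
proof -
  have lam0: "0 \<le> lam1" unfolding lam1_def using \<open>0 < M0\<close> \<open>0 < p\<close>
    by (intro mult_nonneg_nonneg) (auto intro!: divide_nonneg_nonneg)
  have Kpos: "0 < K" unfolding K_def using \<open>0 < \<xi>\<close> \<open>0 < c_low\<close> \<open>0 < c_up\<close>
    by (intro mult_pos_pos) (auto intro: add_pos_pos divide_pos_pos)
  have P1: "\<forall>S. S \<noteq> {} \<and> S \<subseteq> {0..<p} \<and> real (card S) \<le> s \<longrightarrow> (compat n p X \<xi> S)\<^sup>2 \<ge> c_low / 2"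
    if h: "phi_min (sigma_hat n X lam1) {0..<p} \<ge> c_low" "s * lam1 * (1 + \<xi>)\<^sup>2 \<le> c_low / 2"
    using part1[OF \<open>0 < n\<close> \<open>0 < p\<close> lam0 \<open>0 < \<xi>\<close> \<open>0 < c_low\<close> h(1) h(2)] by blast
  show ?thesis
  proof (intro conjI impI allI)
    fix S assume "phi_min (sigma_hat n X lam1) {0..<p} \<ge> c_low \<and> s * lam1 * (1 + \<xi>)\<^sup>2 \<le> c_low / 2"
      "S \<noteq> {} \<and> S \<subseteq> {0..<p} \<and> real (card S) \<le> s"
    thus "(compat n p X \<xi> S)\<^sup>2 \<ge> c_low / 2" using P1 by blast
  next
    fix S m
    assume H: "phi_min (sigma_hat n X lam1) {0..<p} \<ge> c_low \<and> s * lam1 * (1 + \<xi>)\<^sup>2 \<le> c_low / 2 \<and>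
     phi_max (sigma_hat n X lam1) {0..<p} \<le> c_up \<and> s * lam1 * (1 + K) + lam1 \<le> c_low / 2"
      and HS: "S \<noteq> {} \<and> S \<subseteq> {0..<p} \<and> real (card S) \<le> s \<and>
          real m - 1 < K * real (card S) \<and> K * real (card S) \<le> real m"
    have fS: "finite S" using HS finite_subset by blast
    have cS: "1 \<le> real (card S)" using HS fS by (simp add: Suc_le_eq card_gt_0_iff)
    have mb: "real m \<le> K * s + 1"
    proof -
      have "K * real (card S) \<le> K * s" using HS Kpos by (intro mult_left_mono) auto
      thus ?thesis using HS by linarith
    qed
    have lm: "lam1 * real m \<le> lam1 * (K * s + 1)" using mb lam0 by (rule mult_left_mono)
    have sl: "0 \<le> s * lam1" using \<open>0 < s\<close> lam0 by simp
    have hb1: "lam1 * (real (card S) + real m) \<le> c_low / 2"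
    proof -
      have "lam1 * real (card S) \<le> lam1 * s" using HS lam0 by (intro mult_left_mono) auto
      hence "lam1 * (real (card S) + real m) \<le> s * lam1 * (1 + K) + lam1"
        using lm by (simp add: algebra_simps)
      thus ?thesis using H by linarith
    qed
    have hb2: "lam1 * real m \<le> c_low / 2"
    proof -
      have "lam1 * (K * s + 1) \<le> s * lam1 * (1 + K) + lam1" using sl by (simp add: algebra_simps)
      thus ?thesis using lm H by linarith
    qed
    show "phi_minus n p X m S \<ge> c_low / 2"
      using part_minus[OF \<open>0 < p\<close> lam0 \<open>0 < c_low\<close> _ _ _ hb1] H HS by blast
    have kap: "(compat n p X \<xi> S)\<^sup>2 \<ge> c_low / 2" using P1 H HS by blast
    thus "(compat n p X \<xi> S)\<^sup>2 \<ge> c_low / 2" .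
    assume SP: "S \<noteq> {0..<p}"
    have "0 < K * real (card S)" using Kpos cS by simp
    hence m1: "1 \<le> m" using HS by simp
    have pp: "0 < phi_plus n p X m S \<and> phi_plus n p X m S \<le> c_up + c_low / 2"
      using part_plus[OF \<open>0 < n\<close> \<open>0 < p\<close> lam0 \<open>0 < c_low\<close> cols _ _ SP m1 hb2] H HS by blast
    have "\<xi>\<^sup>2 / (compat n p X \<xi> S)\<^sup>2 \<le> \<xi>\<^sup>2 / (c_low / 2)"
    proof -
      have kp: "0 < (compat n p X \<xi> S)\<^sup>2" using kap \<open>0 < c_low\<close> by linarith
      show ?thesis using kap \<open>0 < c_low\<close> kp by (intro divide_left_mono) (auto intro!: mult_pos_pos)
    qed
    also have "\<dots> = K / (c_up + c_low / 2)"
    proof -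
      have Ke: "K = (2 * \<xi>\<^sup>2 / c_low) * (c_up + c_low / 2)"
        unfolding K_def using \<open>0 < c_low\<close> by (simp add: field_simps)
      have "c_up + c_low / 2 \<noteq> 0" using \<open>0 < c_low\<close> \<open>0 < c_up\<close> by simp
      thus ?thesis unfolding Ke by simp
    qed
    also have "\<dots> \<le> K / phi_plus n p X m S"
      using pp Kpos by (intro divide_left_mono) auto
    finally show "\<xi>\<^sup>2 / (compat n p X \<xi> S)\<^sup>2 \<le> K / phi_plus n p X m S" .
  qed
qed

end
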